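(* Let $T$ be a complete theory with monster model $\mathbb{U}$ and let $d$ be a fibered dimension function on $\mathbb{U}$. Let $X\subseteq\mathbb{U}^n$ be a set definable with parameters in a (small) set $C$. Then there exists a tuple $a\in\mathbb{U}^n$ such that $d(a/C)=d(X)$.
   Context: A fibered dimension function is $d:\mathrm{Def}(\mathbb{U})\to\mathbb{N}\cup\{-\infty\}$ on definable (with parameters) sets such that: (1) $d(X)=-\infty$ iff $X=\emptyset$, $d(\{a\})=0$ for each $a\in\mathbb{U}$, $d(\mathbb{U})=1$; (2) $d(X\cup Y)=\max(d(X),d(Y))$; (3) $d$ is invariant under permutations of coordinates; (4) for $X\subseteq\mathbb{U}^{n+1}$ and $l\in\{0,1\}$, the set $X(l):=\{a\in\pi_n(X):d(X_a)=l\}$ is definable and $d(\{(x,y)\in X:x\in X(l)\})=d(X(l))+l$, where $\pi_n$ is projection to the first $n$ coordinates and $X_a=\{y:(a,y)\in X\}$. For a tuple $a$, $d(a/C):=\inf\{d(\varphi(\mathbb{U})):\varphi\in tp(a/C)\}$. *)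

theory Defs
  imports Main "HOL-Library.Extended_Real"
begin

text \<open>Terms and formulas of a first-order language with function symbols 'f and
relation symbols 'r (each symbol is interpreted on tuples of any length, i.e. a symbol
together with an arity).\<close>

datatype 'f trm = Var nat | Fn 'f "'f trm list"

datatype ('f, 'r) fm =
    Eq "'f trm" "'f trm"
  | Rl 'r "'f trm list"
  | Neg "('f, 'r) fm"
  | Conj "('f, 'r) fm" "('f, 'r) fm"
  | Ex nat "('f, 'r) fm"

fun eval :: "('f \<Rightarrow> 'u list \<Rightarrow> 'u) \<Rightarrow> (nat \<Rightarrow> 'u) \<Rightarrow> 'f trm \<Rightarrow> 'u" where
  "eval F v (Var i) = v i"
| "eval F v (Fn f ts) = F f (map (eval F v) ts)"

fun sat :: "('f \<Rightarrow> 'u list \<Rightarrow> 'u) \<Rightarrow> ('r \<Rightarrow> 'u list \<Rightarrow> bool) \<Rightarrow> (nat \<Rightarrow> 'u)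
             \<Rightarrow> ('f, 'r) fm \<Rightarrow> bool" where
  "sat F R v (Eq s t) = (eval F v s = eval F v t)"
| "sat F R v (Rl r ts) = R r (map (eval F v) ts)"
| "sat F R v (Neg \<phi>) = (\<not> sat F R v \<phi>)"
| "sat F R v (Conj \<phi> \<psi>) = (sat F R v \<phi> \<and> sat F R v \<psi>)"
| "sat F R v (Ex i \<phi>) = (\<exists>u. sat F R (v(i := u)) \<phi>)"

fun tvars :: "'f trm \<Rightarrow> nat set" where
  "tvars (Var i) = {i}"
| "tvars (Fn f ts) = \<Union> (set (map tvars ts))"

fun fv :: "('f, 'r) fm \<Rightarrow> nat set" where
  "fv (Eq s t) = tvars s \<union> tvars t"
| "fv (Rl r ts) = \<Union> (set (map tvars ts))"
| "fv (Neg \<phi>) = fv \<phi>"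
| "fv (Conj \<phi> \<psi>) = fv \<phi> \<union> fv \<psi>"
| "fv (Ex i \<phi>) = fv \<phi> - {i}"

text \<open>\<open>U^n\<close> is represented as the set of lists of length \<open>n\<close>.
A set \<open>X \<subseteq> U^n\<close> is definable with parameters from \<open>A\<close> if it is
\<open>\<phi>(U, c)\<close> for a formula \<open>\<phi>(x_0..x_{n-1}, y_0..y_{m-1})\<close> and a tuple
\<open>c\<close> of length \<open>m\<close> from \<open>A\<close>.\<close>

definition definable ::
  "('f \<Rightarrow> 'u list \<Rightarrow> 'u) \<Rightarrow> ('r \<Rightarrow> 'u list \<Rightarrow> bool) \<Rightarrow> 'u set \<Rightarrow> nat \<Rightarrow> 'u list set \<Rightarrow> bool" where
  "definable F R A n X \<longleftrightarrow>
     (\<exists>(\<phi> :: ('f, 'r) fm) c. fv \<phi> \<subseteq> {..< n + length c} \<and> set c \<subseteq> A \<and>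
        X = {a. length a = n \<and> sat F R (\<lambda>i. (a @ c) ! i) \<phi>})"

text \<open>\<open>\<kappa>\<close>-saturation: every partial n-type over a set of size < \<open>\<kappa>\<close>
(given by the sets it defines) that is finitely satisfiable is realised.\<close>

definition saturated ::
  "'k rel \<Rightarrow> ('f \<Rightarrow> 'u list \<Rightarrow> 'u) \<Rightarrow> ('r \<Rightarrow> 'u list \<Rightarrow> bool) \<Rightarrow> bool" where
  "saturated \<kappa> F R \<longleftrightarrow>
     (\<forall>A n \<X>. (card_of A, \<kappa>) \<in> ordLess \<longrightarrow> (\<forall>X\<in>\<X>. definable F R A n X) \<longrightarrow>
        (\<forall>\<Y>\<subseteq>\<X>. finite \<Y> \<longrightarrow> (\<exists>a. length a = n \<and> (\<forall>Y\<in>\<Y>. a \<in> Y))) \<longrightarrow>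
        (\<exists>a. length a = n \<and> (\<forall>X\<in>\<X>. a \<in> X)))"

definition automorphism ::
  "('f \<Rightarrow> 'u list \<Rightarrow> 'u) \<Rightarrow> ('r \<Rightarrow> 'u list \<Rightarrow> bool) \<Rightarrow> ('u \<Rightarrow> 'u) \<Rightarrow> bool" where
  "automorphism F R \<sigma> \<longleftrightarrow> bij \<sigma> \<and> (\<forall>f xs. \<sigma> (F f xs) = F f (map \<sigma> xs)) \<and>
     (\<forall>r xs. R r (map \<sigma> xs) = R r xs)"

definition partial_elementary ::
  "('f \<Rightarrow> 'u list \<Rightarrow> 'u) \<Rightarrow> ('r \<Rightarrow> 'u list \<Rightarrow> bool) \<Rightarrow> 'u set \<Rightarrow> ('u \<Rightarrow> 'u) \<Rightarrow> bool" where
  "partial_elementary F R A f \<longleftrightarrow>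
     (\<forall>(\<phi> :: ('f, 'r) fm) c. set c \<subseteq> A \<longrightarrow> fv \<phi> \<subseteq> {..< length c} \<longrightarrow>
        (sat F R (\<lambda>i. c ! i) \<phi> \<longleftrightarrow> sat F R (\<lambda>i. map f c ! i) \<phi>))"

definition strongly_homogeneous ::
  "'k rel \<Rightarrow> ('f \<Rightarrow> 'u list \<Rightarrow> 'u) \<Rightarrow> ('r \<Rightarrow> 'u list \<Rightarrow> bool) \<Rightarrow> bool" where
  "strongly_homogeneous \<kappa> F R \<longleftrightarrow>
     (\<forall>A f. (card_of A, \<kappa>) \<in> ordLess \<longrightarrow> partial_elementary F R A f \<longrightarrow>
        (\<exists>\<sigma>. automorphism F R \<sigma> \<and> (\<forall>x\<in>A. \<sigma> x = f x)))"

text \<open>A monster model: \<open>\<kappa>\<close>-saturated and strongly \<open>\<kappa>\<close>-homogeneous for an infinite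
cardinal \<open>\<kappa>\<close> larger than the language. "Small" means of size < \<open>\<kappa>\<close>.
(The complete theory is \<open>T = Th(U)\<close>.)\<close>

definition monster ::
  "'k rel \<Rightarrow> ('f \<Rightarrow> 'u list \<Rightarrow> 'u) \<Rightarrow> ('r \<Rightarrow> 'u list \<Rightarrow> bool) \<Rightarrow> bool" where
  "monster \<kappa> F R \<longleftrightarrow> Card_order \<kappa> \<and> infinite (Field \<kappa>) \<and>
     (card_of (UNIV :: ('f, 'r) fm set), \<kappa>) \<in> ordLess \<and>
     saturated \<kappa> F R \<and> strongly_homogeneous \<kappa> F R"

definition fiber :: "'u list set \<Rightarrow> 'u list \<Rightarrow> 'u list set" where
  "fiber X a = {[y] | y. a @ [y] \<in> X}"

definition dim_part :: "('u list set \<Rightarrow> ereal) \<Rightarrow> nat \<Rightarrow> 'u list set \<Rightarrow> nat \<Rightarrow> 'u list set" where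
  "dim_part d n X l = {a \<in> take n ` X. d (fiber X a) = ereal (real l)}"

definition fibered_dim ::
  "('f \<Rightarrow> 'u list \<Rightarrow> 'u) \<Rightarrow> ('r \<Rightarrow> 'u list \<Rightarrow> bool) \<Rightarrow> ('u list set \<Rightarrow> ereal) \<Rightarrow> bool" where
  "fibered_dim F R d \<longleftrightarrow>
     (\<forall>n X. definable F R UNIV n X \<longrightarrow> d X \<in> insert (-\<infinity>) (range (\<lambda>k::nat. ereal (real k)))) \<and>
     (\<forall>n X. definable F R UNIV n X \<longrightarrow> (d X = -\<infinity> \<longleftrightarrow> X = {})) \<and>
     (\<forall>a. d {[a]} = 0) \<and> d {a. length a = 1} = 1 \<and>
     (\<forall>n X Y. definable F R UNIV n X \<longrightarrow> definable F R UNIV n Y \<longrightarrow>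
        d (X \<union> Y) = max (d X) (d Y)) \<and>
     (\<forall>n X \<sigma>. definable F R UNIV n X \<longrightarrow> bij_betw \<sigma> {..<n} {..<n} \<longrightarrow>
        d ((\<lambda>a. map (\<lambda>i. a ! \<sigma> i) [0..<n]) ` X) = d X) \<and>
     (\<forall>n X l. definable F R UNIV (Suc n) X \<longrightarrow> l \<in> {0, 1} \<longrightarrow>
        definable F R UNIV n (dim_part d n X l) \<and>
        d {x \<in> X. take n x \<in> dim_part d n X l} = d (dim_part d n X l) + ereal (real l))"

text \<open>\<open>d(a/C)\<close>: infimum of \<open>d(\<phi>(U))\<close> over formulas \<open>\<phi> \<in> tp(a/C)\<close>, i.e. over
\<open>C\<close>-definable sets containing \<open>a\<close>.\<close>

definition dim_over ::
  "('f \<Rightarrow> 'u list \<Rightarrow> 'u) \<Rightarrow> ('r \<Rightarrow> 'u list \<Rightarrow> bool) \<Rightarrow> ('u list set \<Rightarrow> ereal) \<Rightarrow> 'u list \<Rightarrow> 'u set \<Rightarrow> ereal" where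
  "dim_over F R d a C = (INF X \<in> {X. definable F R C (length a) X \<and> a \<in> X}. d X)"

end

theory Submission
  imports Defs
begin

fun rent :: "(nat \<Rightarrow> nat) \<Rightarrow> 'f trm \<Rightarrow> 'f trm" where
  "rent \<rho> (Var i) = Var (\<rho> i)"
| "rent \<rho> (Fn f ts) = Fn f (map (rent \<rho>) ts)"

fun renf :: "(nat \<Rightarrow> nat) \<Rightarrow> ('f, 'r) fm \<Rightarrow> ('f, 'r) fm" where
  "renf \<rho> (Eq s t) = Eq (rent \<rho> s) (rent \<rho> t)"
| "renf \<rho> (Rl r ts) = Rl r (map (rent \<rho>) ts)"
| "renf \<rho> (Neg \<phi>) = Neg (renf \<rho> \<phi>)"
| "renf \<rho> (Conj \<phi> \<psi>) = Conj (renf \<rho> \<phi>) (renf \<rho> \<psi>)"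
| "renf \<rho> (Ex i \<phi>) = Ex (\<rho> i) (renf \<rho> \<phi>)"

lemma eval_rent: "eval F v (rent \<rho> t) = eval F (v \<circ> \<rho>) t"
  by (induction t) (auto cong: map_cong)

lemma tvars_rent: "tvars (rent \<rho> t) = \<rho> ` tvars t"
  by (induction t) auto

lemma sat_renf: "inj \<rho> \<Longrightarrow> sat F R v (renf \<rho> \<phi>) = sat F R (v \<circ> \<rho>) \<phi>"
proof (induction \<phi> arbitrary: v)
  case (Ex i \<phi>)
  have "\<And>u. (v(\<rho> i := u)) \<circ> \<rho> = (v \<circ> \<rho>)(i := u)"
    using Ex.prems by (auto simp: inj_def)
  then have "\<And>u. sat F R (v(\<rho> i := u)) (renf \<rho> \<phi>) = sat F R ((v \<circ> \<rho>)(i := u)) \<phi>"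
    using Ex.IH[OF Ex.prems] by metis
  then show ?case by (metis renf.simps(5) sat.simps(5))
qed (auto simp: eval_rent comp_def)

lemma fv_renf: "inj \<rho> \<Longrightarrow> fv (renf \<rho> \<phi>) = \<rho> ` fv \<phi>"
  by (induction \<phi>) (auto simp: tvars_rent image_set_diff image_Union)

lemma eval_cong: "(\<forall>i\<in>tvars t. v i = w i) \<Longrightarrow> eval F v t = eval F w t"
  by (induction t) (auto cong: map_cong)

lemma sat_cong: "(\<forall>i\<in>fv \<phi>. v i = w i) \<Longrightarrow> sat F R v \<phi> = sat F R w \<phi>"
proof (induction \<phi> arbitrary: v w)
  case (Eq s t) then show ?case using eval_cong[of s v w F] eval_cong[of t v w F] by simp
next
  case (Rl r ts)
  have "map (eval F v) ts = map (eval F w) ts"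
    using Rl by (intro map_cong refl eval_cong) auto
  then show ?case by (metis sat.simps(2))
next
  case (Conj \<phi>1 \<phi>2)
  then show ?case by (metis sat.simps(4) UnI1 UnI2 fv.simps(4))
next
  case (Ex i \<phi>)
  have "\<And>u. sat F R (v(i := u)) \<phi> = sat F R (w(i := u)) \<phi>"
    using Ex.prems by (intro Ex.IH) auto
  then show ?case by simp
qed auto

lemma definable_sub: "definable F R A n X \<Longrightarrow> X \<subseteq> {a. length a = n}"
  unfolding definable_def by auto

lemma definable_UNIV: "definable F R A n X \<Longrightarrow> definable F R UNIV n X"
  unfolding definable_def by blast

lemma definable_empty: "definable F R A n {}"
  unfolding definable_def
  by (rule exI[of _ "Ex 0 (Neg (Eq (Var 0) (Var 0)))"], rule exI[of _ "[]"]) auto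

lemma definable_compl:
  assumes "definable F R A n X"
  shows "definable F R A n {a. length a = n \<and> a \<notin> X}"
proof -
  obtain \<phi> c where h: "fv \<phi> \<subseteq> {..< n + length c}" "set c \<subseteq> A"
    "X = {a. length a = n \<and> sat F R (\<lambda>i. (a @ c) ! i) \<phi>}"
    using assms unfolding definable_def by blast
  show ?thesis unfolding definable_def
    by (rule exI[of _ "Neg \<phi>"], rule exI[of _ c]) (use h in auto)
qed

lemma definable_union:
  assumes "definable F R A n X" "definable F R A n Y"
  shows "definable F R A n (X \<union> Y)"
proof -
  obtain \<phi> c1 where h1: "fv \<phi> \<subseteq> {..< n + length c1}" "set c1 \<subseteq> A"
    "X = {a. length a = n \<and> sat F R (\<lambda>i. (a @ c1) ! i) \<phi>}"
    using assms(1) unfolding definable_def by blast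
  obtain \<psi> c2 where h2: "fv \<psi> \<subseteq> {..< n + length c2}" "set c2 \<subseteq> A"
    "Y = {a. length a = n \<and> sat F R (\<lambda>i. (a @ c2) ! i) \<psi>}"
    using assms(2) unfolding definable_def by blast
  define \<rho> where "\<rho> = (\<lambda>j. if j < n then j else j + length c1)"
  have inj: "inj \<rho>" unfolding \<rho>_def inj_def by auto
  define \<theta> where "\<theta> = Neg (Conj (Neg \<phi>) (Neg (renf \<rho> \<psi>)))"
  have fvt: "fv \<theta> \<subseteq> {..< n + length (c1 @ c2)}"
    using h1(1) h2(1) unfolding \<theta>_def fv.simps fv_renf[OF inj] by (auto simp: \<rho>_def subset_eq)
  have s1: "sat F R (\<lambda>i. (a @ c1 @ c2) ! i) \<phi> = sat F R (\<lambda>i. (a @ c1) ! i) \<phi>"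
    if "length a = n" for a
    by (rule sat_cong) (use h1(1) that in \<open>auto simp: nth_append\<close>)
  have s2: "sat F R (\<lambda>i. (a @ c1 @ c2) ! i) (renf \<rho> \<psi>) = sat F R (\<lambda>i. (a @ c2) ! i) \<psi>"
    if "length a = n" for a
    unfolding sat_renf[OF inj]
    by (rule sat_cong) (use h2(1) that in \<open>auto simp: nth_append \<rho>_def\<close>)
  show ?thesis unfolding definable_def
    apply (rule exI[of _ \<theta>], rule exI[of _ "c1 @ c2"])
    using fvt h1 h2 s1 s2 by (auto simp: \<theta>_def)
qed

theorem proposition1p7:
  fixes F :: "'f \<Rightarrow> 'u list \<Rightarrow> 'u" and R :: "'r \<Rightarrow> 'u list \<Rightarrow> bool"
    and \<kappa> :: "'k rel" and d :: "'u list set \<Rightarrow> ereal"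
    and C :: "'u set" and X :: "'u list set" and n :: nat
  assumes "monster \<kappa> F R"
    and "fibered_dim F R d"
    and "(card_of C, \<kappa>) \<in> ordLess"
    and "definable F R C n X"
    and "X \<noteq> {}"
  shows "\<exists>a. length a = n \<and> dim_over F R d a C = d X"
proof -
  have sat: "saturated \<kappa> F R" using assms(1) unfolding monster_def by blast
  have emp: "\<And>m Z. definable F R UNIV m Z \<Longrightarrow> d Z = -\<infinity> \<longleftrightarrow> Z = {}"
    using assms(2) unfolding fibered_dim_def by blast
  have un: "\<And>m Y Z. definable F R UNIV m Y \<Longrightarrow> definable F R UNIV m Z \<Longrightarrow>
        d (Y \<union> Z) = max (d Y) (d Z)"
    using assms(2) unfolding fibered_dim_def by blast
  have XU: "definable F R UNIV n X" using assms(4) by (rule definable_UNIV)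
  have dX: "d X \<noteq> -\<infinity>" using emp[OF XU] assms(5) by simp
  have mono: "d Y \<le> d Z" if "definable F R UNIV n Y" "definable F R UNIV n Z" "Y \<subseteq> Z" for Y Z
  proof -
    have "d Z = d (Y \<union> Z)" using that(3) by (simp add: sup_absorb2)
    also have "\<dots> = max (d Y) (d Z)" using un that(1,2) by blast
    finally show ?thesis by (simp add: max_def split: if_splits)
  qed
  define D where "D = {Y. definable F R C n Y \<and> d Y < d X}"
  define cp where "cp = (\<lambda>Y::'u list set. {a. length a = n \<and> a \<notin> Y})"
  define \<Sigma> where "\<Sigma> = insert X (cp ` D)"
  have finD: "definable F R UNIV n (\<Union>S) \<and> d (\<Union>S) < d X" if "finite S" "S \<subseteq> D" for S
    using that
  proof (induction S rule: finite_induct)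
    case empty
    have "d {} = -\<infinity>" using emp[OF definable_empty] by simp
    then show ?case using dX definable_empty by (simp add: ereal_infty_less(2) order_less_le)
  next
    case (insert Y S)
    have Y: "definable F R UNIV n Y" "d Y < d X"
      using insert.prems unfolding D_def by (auto intro: definable_UNIV)
    have IH: "definable F R UNIV n (\<Union>S)" "d (\<Union>S) < d X" using insert by auto
    show ?case using Y IH un[OF Y(1) IH(1)] definable_union[OF Y(1) IH(1)] by simp
  qed
  have avoid: "\<exists>a\<in>X. a \<notin> \<Union>S" if "finite S" "S \<subseteq> D" for S
  proof (rule ccontr)
    assume "\<not> ?thesis"
    then have sub: "X \<subseteq> \<Union>S" by blast
    have "d X \<le> d (\<Union>S)" using mono[OF XU _ sub] finD[OF that] by blast
    then show False using finD[OF that] by (simp add: not_less[symmetric])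
  qed
  have defs: "\<forall>Z\<in>\<Sigma>. definable F R C n Z"
    unfolding \<Sigma>_def cp_def D_def using assms(4) definable_compl by blast
  have fin: "\<forall>\<Y>\<subseteq>\<Sigma>. finite \<Y> \<longrightarrow> (\<exists>a. length a = n \<and> (\<forall>Y\<in>\<Y>. a \<in> Y))"
  proof (intro allI impI)
    fix \<Y> assume Y: "\<Y> \<subseteq> \<Sigma>" "finite \<Y>"
    have "\<Y> - {X} \<subseteq> cp ` D" using Y(1) unfolding \<Sigma>_def by blast
    then obtain S where S: "S \<subseteq> D" "finite S" "\<Y> - {X} = cp ` S"
      using finite_subset_image[of "\<Y> - {X}" cp D] Y(2) by blast
    obtain a where a: "a \<in> X" "a \<notin> \<Union>S" using avoid[OF S(2,1)] by blast
    have la: "length a = n" using a(1) definable_sub[OF assms(4)] by blast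
    have "\<forall>Y\<in>\<Y>. a \<in> Y"
    proof
      fix Z assume "Z \<in> \<Y>"
      then have "Z = X \<or> Z \<in> cp ` S" using S(3) by blast
      then show "a \<in> Z" using a la unfolding cp_def by auto
    qed
    then show "\<exists>a. length a = n \<and> (\<forall>Y\<in>\<Y>. a \<in> Y)" using la by blast
  qed
  obtain a where a: "length a = n" "\<forall>Z\<in>\<Sigma>. a \<in> Z"
    using sat assms(3) defs fin unfolding saturated_def by blast
  have aX: "a \<in> X" using a(2) unfolding \<Sigma>_def by blast
  have ge: "d X \<le> d Y" if "definable F R C n Y" "a \<in> Y" for Y
  proof (rule ccontr)
    assume "\<not> d X \<le> d Y"
    then have "Y \<in> D" using that(1) unfolding D_def by auto
    then have "cp Y \<in> \<Sigma>" unfolding \<Sigma>_def by blast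
    then have "a \<in> cp Y" using a(2) by blast
    then show False using that(2) unfolding cp_def by blast
  qed
  have "dim_over F R d a C = d X"
    unfolding dim_over_def a(1)
  proof (rule antisym)
    show "(INF Y\<in>{Y. definable F R C n Y \<and> a \<in> Y}. d Y) \<le> d X"
      using assms(4) aX by (auto intro: INF_lower2)
    show "d X \<le> (INF Y\<in>{Y. definable F R C n Y \<and> a \<in> Y}. d Y)"
      using ge by (auto intro: INF_greatest)
  qed
  then show ?thesis using a(1) by blast
qed

end
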